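(* On the half-duplex $(a,b,c)$-relay channel, static QMF achieves the full-duplex DMT $d_{f.d.}(r)=(\min(a,b)-r)^++(c-r)^+$ (and is therefore DMT optimal) in each of the following cases: (i) $c\ge\min(a,b)$ (for all $r\ge 0$); (ii) $c<\min(a,b)$ and $0\le r\le c$. That is, in these cases $d_{QMF}(r)=d_{f.d.}(r)$.
   Context: The $(a,b,c)$-relay channel: source $S$, relay $R$, destination $D$; i.i.d. $\mathcal{CN}(0,1)$ quasi-static gains $h_{sr},h_{rd},h_{sd}$ known only at receivers; average SNRs $\rho^a,\rho^b,\rho^c$ on S-R, R-D, S-D. Exponential orders $\alpha,\beta,\gamma$ of $|h_{sr}|^2\rho^a,|h_{rd}|^2\rho^b,|h_{sd}|^2\rho^c$ (e.g. $\alpha=\lim_{\rho\to\infty}\log(1+|h_{sr}|^2\rho^a)/\log\rho$). The full-duplex DMT is $d_{f.d.}(r)=\min\{a+b+c-\alpha-\beta-\gamma:\min(\max(\alpha,\gamma),\max(\beta,\gamma))\le r,\ \alpha\in[0,a],\beta\in[0,b],\gamma\in[0,c]\}$, an upper bound on the half-duplex DMT. Static QMF (relay listens half the time, quantizes at noise level, maps to a random codeword and transmits in the other half, fixed schedule) has DMT $d_{QMF}(r)=\min\{a+b+c-\alpha-\beta-\gamma: r_{h.d.}(1/2)\le r,\ \alpha\in[0,a],\beta\in[0,b],\gamma\in[0,c]\}$ where $r_{h.d.}(t)=\min\{t\max(\alpha,\gamma)+(1-t)\gamma,\ t\gamma+(1-t)\max(\beta,\gamma)\}$. $x^+=\max(x,0)$.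 *)

theory Defs
  imports Complex_Main
begin

definition pos_part :: "real \<Rightarrow> real" where
  "pos_part x = max x 0"

definition d_fd :: "real \<Rightarrow> real \<Rightarrow> real \<Rightarrow> real \<Rightarrow> real" where
  "d_fd a b c r = Inf {a + b + c - \<alpha> - \<beta> - \<gamma> | \<alpha> \<beta> \<gamma>.
      min (max \<alpha> \<gamma>) (max \<beta> \<gamma>) \<le> r \<and>
      \<alpha> \<in> {0..a} \<and> \<beta> \<in> {0..b} \<and> \<gamma> \<in> {0..c}}"

definition r_hd :: "real \<Rightarrow> real \<Rightarrow> real \<Rightarrow> real \<Rightarrow> real" where
  "r_hd t \<alpha> \<beta> \<gamma> = min (t * max \<alpha> \<gamma> + (1 - t) * \<gamma>) (t * \<gamma> + (1 - t) * max \<beta> \<gamma>)"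

text \<open>DMT of static QMF (relay listens half the time).\<close>
definition d_QMF :: "real \<Rightarrow> real \<Rightarrow> real \<Rightarrow> real \<Rightarrow> real" where
  "d_QMF a b c r = Inf {a + b + c - \<alpha> - \<beta> - \<gamma> | \<alpha> \<beta> \<gamma>.
      r_hd (1/2) \<alpha> \<beta> \<gamma> \<le> r \<and>
      \<alpha> \<in> {0..a} \<and> \<beta> \<in> {0..b} \<and> \<gamma> \<in> {0..c}}"

end

theory Submission
  imports Defs
begin

lemma qmf_lb:
  fixes a b c r x y z :: real
  assumes "0 \<le> a" "0 \<le> b" "0 \<le> c" "0 \<le> r"
    and "c \<ge> min a b \<or> (c < min a b \<and> r \<le> c)"
    and "r_hd (1/2) x y z \<le> r" "x \<in> {0..a}" "y \<in> {0..b}" "z \<in> {0..c}"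
  shows "pos_part (min a b - r) + pos_part (c - r) \<le> a + b + c - x - y - z"
  using assms unfolding r_hd_def pos_part_def
  by (auto simp: min_def max_def split: if_splits)

lemma fd_imp_qmf:
  fixes x y z :: real
  assumes "min (max x z) (max y z) \<le> r"
  shows "r_hd (1/2) x y z \<le> r"
  using assms unfolding r_hd_def by (auto simp: min_def max_def split: if_splits)

lemma witness:
  fixes a b c r :: real
  assumes "0 \<le> a" "0 \<le> b" "0 \<le> c" "0 \<le> r"
  shows "\<exists>x y z. pos_part (min a b - r) + pos_part (c - r) = a + b + c - x - y - z \<and>
      min (max x z) (max y z) \<le> r \<and> x \<in> {0..a} \<and> y \<in> {0..b} \<and> z \<in> {0..c}"
proof (cases "a \<le> b")
  case True
  show ?thesis
    by (rule exI[of _ "min a r"], rule exI[of _ b], rule exI[of _ "min c r"])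
      (use assms True in \<open>auto simp: pos_part_def min_def max_def\<close>)
next
  case False
  show ?thesis
    by (rule exI[of _ a], rule exI[of _ "min b r"], rule exI[of _ "min c r"])
      (use assms False in \<open>auto simp: pos_part_def min_def max_def\<close>)
qed

theorem corollary1:
  fixes a b c r :: real
  assumes "0 \<le> a" and "0 \<le> b" and "0 \<le> c" and "0 \<le> r"
    and "c \<ge> min a b \<or> (c < min a b \<and> r \<le> c)"
  shows "d_fd a b c r = pos_part (min a b - r) + pos_part (c - r)
         \<and> d_QMF a b c r = d_fd a b c r"
proof -
  let ?T = "pos_part (min a b - r) + pos_part (c - r)"
  obtain x y z where w: "?T = a + b + c - x - y - z"
      "min (max x z) (max y z) \<le> r" "x \<in> {0..a}" "y \<in> {0..b}" "z \<in> {0..c}"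
    using witness[OF assms(1-4)] by blast
  have fd: "d_fd a b c r = ?T"
    unfolding d_fd_def
  proof (rule cInf_eq_minimum)
    show "?T \<in> {a + b + c - \<alpha> - \<beta> - \<gamma> | \<alpha> \<beta> \<gamma>.
      min (max \<alpha> \<gamma>) (max \<beta> \<gamma>) \<le> r \<and>
      \<alpha> \<in> {0..a} \<and> \<beta> \<in> {0..b} \<and> \<gamma> \<in> {0..c}}" using w by blast
  next
    fix v assume "v \<in> {a + b + c - \<alpha> - \<beta> - \<gamma> | \<alpha> \<beta> \<gamma>.
      min (max \<alpha> \<gamma>) (max \<beta> \<gamma>) \<le> r \<and>
      \<alpha> \<in> {0..a} \<and> \<beta> \<in> {0..b} \<and> \<gamma> \<in> {0..c}}"
    then show "?T \<le> v" using qmf_lb[OF assms] fd_imp_qmf by blast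
  qed
  have qmf: "d_QMF a b c r = ?T"
    unfolding d_QMF_def
  proof (rule cInf_eq_minimum)
    show "?T \<in> {a + b + c - \<alpha> - \<beta> - \<gamma> | \<alpha> \<beta> \<gamma>.
      r_hd (1/2) \<alpha> \<beta> \<gamma> \<le> r \<and>
      \<alpha> \<in> {0..a} \<and> \<beta> \<in> {0..b} \<and> \<gamma> \<in> {0..c}}" using w fd_imp_qmf by blast
  next
    fix v assume "v \<in> {a + b + c - \<alpha> - \<beta> - \<gamma> | \<alpha> \<beta> \<gamma>.
      r_hd (1/2) \<alpha> \<beta> \<gamma> \<le> r \<and>
      \<alpha> \<in> {0..a} \<and> \<beta> \<in> {0..b} \<and> \<gamma> \<in> {0..c}}"
    then show "?T \<le> v" using qmf_lb[OF assms] by blast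
  qed
  show ?thesis using fd qmf by simp
qed

end
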